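(* The variety $\mathsf{V}(S_{(4,467)})$ is the ai-semiring variety defined by the identities $xy\approx yx$, $x^2y\approx xy$, $x^2\approx x^2+x$, $x+xyz\approx x+xyz+xy$, $x_1x_2+x_3x_4\approx x_1x_2+x_3x_4+x_1x_2x_3x_4$.
   Context: An ai-semiring is an algebra $(S,+,\cdot)$ with $(S,+)$ a semilattice, $(S,\cdot)$ a semigroup, and both distributive laws. $\mathsf{V}(S)$ is the variety generated by $S$; "the ai-semiring variety defined by identities $\Sigma$" is the class of all ai-semirings satisfying $\Sigma$. $S_{(4,467)}$ has carrier $\{1,2,3,4\}$; addition: $x+x=x$, $2+x=x$, $1+x=1$ for all $x$, $3+4=1$; multiplication (row $a$, column $b$ gives $a\cdot b$): row $1$: $1,3,3,1$; row $2$: $3,2,3,3$; row $3$: $3,3,3,3$; row $4$: $1,3,3,1$. *)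

theory Defs
  imports Main
begin

datatype 'v trm = Var 'v | Add "'v trm" "'v trm" | Mul "'v trm" "'v trm"

fun eval :: "('a \<Rightarrow> 'a \<Rightarrow> 'a) \<Rightarrow> ('a \<Rightarrow> 'a \<Rightarrow> 'a) \<Rightarrow> ('v \<Rightarrow> 'a) \<Rightarrow> 'v trm \<Rightarrow> 'a" where
  "eval ad mu \<sigma> (Var v) = \<sigma> v"
| "eval ad mu \<sigma> (Add p q) = ad (eval ad mu \<sigma> p) (eval ad mu \<sigma> q)"
| "eval ad mu \<sigma> (Mul p q) = mu (eval ad mu \<sigma> p) (eval ad mu \<sigma> q)"

definition closed_alg :: "'a set \<Rightarrow> ('a \<Rightarrow> 'a \<Rightarrow> 'a) \<Rightarrow> ('a \<Rightarrow> 'a \<Rightarrow> 'a) \<Rightarrow> bool" where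
  "closed_alg A ad mu \<longleftrightarrow> (\<forall>x\<in>A. \<forall>y\<in>A. ad x y \<in> A \<and> mu x y \<in> A)"

definition satisfies :: "'a set \<Rightarrow> ('a \<Rightarrow> 'a \<Rightarrow> 'a) \<Rightarrow> ('a \<Rightarrow> 'a \<Rightarrow> 'a) \<Rightarrow> 'v trm \<Rightarrow> 'v trm \<Rightarrow> bool" where
  "satisfies A ad mu p q \<longleftrightarrow> (\<forall>\<sigma>. (\<forall>v. \<sigma> v \<in> A) \<longrightarrow> eval ad mu \<sigma> p = eval ad mu \<sigma> q)"

definition ai_semiring :: "'a set \<Rightarrow> ('a \<Rightarrow> 'a \<Rightarrow> 'a) \<Rightarrow> ('a \<Rightarrow> 'a \<Rightarrow> 'a) \<Rightarrow> bool" where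
  "ai_semiring A ad mu \<longleftrightarrow> closed_alg A ad mu \<and>
     (\<forall>x\<in>A. \<forall>y\<in>A. \<forall>z\<in>A.
        ad (ad x y) z = ad x (ad y z) \<and> ad x y = ad y x \<and> ad x x = x \<and>
        mu (mu x y) z = mu x (mu y z) \<and>
        mu x (ad y z) = ad (mu x y) (mu x z) \<and>
        mu (ad x y) z = ad (mu x z) (mu y z))"

datatype s4 = E1 | E2 | E3 | E4

fun add4 :: "s4 \<Rightarrow> s4 \<Rightarrow> s4" where
  "add4 E1 _ = E1"
| "add4 _ E1 = E1"
| "add4 E2 y = y"
| "add4 x E2 = x"
| "add4 E3 E3 = E3"
| "add4 E4 E4 = E4"
| "add4 E3 E4 = E1"
| "add4 E4 E3 = E1"

fun mul4 :: "s4 \<Rightarrow> s4 \<Rightarrow> s4" where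
  "mul4 E1 E1 = E1" | "mul4 E1 E2 = E3" | "mul4 E1 E3 = E3" | "mul4 E1 E4 = E1"
| "mul4 E2 E1 = E3" | "mul4 E2 E2 = E2" | "mul4 E2 E3 = E3" | "mul4 E2 E4 = E3"
| "mul4 E3 _ = E3"
| "mul4 E4 E1 = E1" | "mul4 E4 E2 = E3" | "mul4 E4 E3 = E3" | "mul4 E4 E4 = E1"

text \<open>Membership in the variety V(S) generated by S: by Birkhoff's HSP theorem,
  V(S) is exactly the class of algebras satisfying every identity of S.\<close>

definition in_V_S4 :: "'a set \<Rightarrow> ('a \<Rightarrow> 'a \<Rightarrow> 'a) \<Rightarrow> ('a \<Rightarrow> 'a \<Rightarrow> 'a) \<Rightarrow> bool" where
  "in_V_S4 A ad mu \<longleftrightarrow> closed_alg A ad mu \<and>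
     (\<forall>p q :: nat trm. satisfies (UNIV :: s4 set) add4 mul4 p q \<longrightarrow> satisfies A ad mu p q)"

end

theory Submission
  imports Defs
begin


fun wv :: "('a \<Rightarrow> 'a \<Rightarrow> 'a) \<Rightarrow> ('v \<Rightarrow> 'a) \<Rightarrow> 'v list \<Rightarrow> 'a" where
  "wv mu \<sigma> [] = undefined"
| "wv mu \<sigma> [x] = \<sigma> x"
| "wv mu \<sigma> (x#y#zs) = mu (\<sigma> x) (wv mu \<sigma> (y#zs))"

fun lsum :: "('a \<Rightarrow> 'a \<Rightarrow> 'a) \<Rightarrow> 'a list \<Rightarrow> 'a" where
  "lsum ad [] = undefined"
| "lsum ad [x] = x"
| "lsum ad (x#y#zs) = ad x (lsum ad (y#zs))"

fun mons :: "'v trm \<Rightarrow> 'v list list" where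
  "mons (Var v) = [[v]]"
| "mons (Add p q) = mons p @ mons q"
| "mons (Mul p q) = concat (map (\<lambda>u. map (\<lambda>v. u @ v) (mons q)) (mons p))"

definition leq :: "('a \<Rightarrow> 'a \<Rightarrow> 'a) \<Rightarrow> 'a \<Rightarrow> 'a \<Rightarrow> bool" where
  "leq ad x y \<longleftrightarrow> ad x y = y"

lemma mons_ne: "mons t \<noteq> []" by (induction t) auto
lemma mons_words: "w \<in> set (mons t) \<Longrightarrow> w \<noteq> []" by (induction t arbitrary: w) auto

locale aisr =
  fixes A :: "'a set" and ad mu :: "'a \<Rightarrow> 'a \<Rightarrow> 'a"
  assumes ai: "ai_semiring A ad mu"
begin

lemma cad: "x\<in>A \<Longrightarrow> y\<in>A \<Longrightarrow> ad x y \<in> A"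
  using ai unfolding ai_semiring_def closed_alg_def by blast
lemma cmu: "x\<in>A \<Longrightarrow> y\<in>A \<Longrightarrow> mu x y \<in> A"
  using ai unfolding ai_semiring_def closed_alg_def by blast
lemma ad_assoc: "x\<in>A \<Longrightarrow> y\<in>A \<Longrightarrow> z\<in>A \<Longrightarrow> ad (ad x y) z = ad x (ad y z)"
  using ai unfolding ai_semiring_def by blast
lemma ad_comm: "x\<in>A \<Longrightarrow> y\<in>A \<Longrightarrow> ad x y = ad y x"
  using ai unfolding ai_semiring_def by blast
lemma ad_idem: "x\<in>A \<Longrightarrow> ad x x = x"
  using ai unfolding ai_semiring_def by blast
lemma mu_assoc: "x\<in>A \<Longrightarrow> y\<in>A \<Longrightarrow> z\<in>A \<Longrightarrow> mu (mu x y) z = mu x (mu y z)"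
  using ai unfolding ai_semiring_def by blast
lemma distl: "x\<in>A \<Longrightarrow> y\<in>A \<Longrightarrow> z\<in>A \<Longrightarrow> mu x (ad y z) = ad (mu x y) (mu x z)"
  using ai unfolding ai_semiring_def by blast
lemma distr: "x\<in>A \<Longrightarrow> y\<in>A \<Longrightarrow> z\<in>A \<Longrightarrow> mu (ad x y) z = ad (mu x z) (mu y z)"
  using ai unfolding ai_semiring_def by blast

lemma lrefl: "x\<in>A \<Longrightarrow> leq ad x x" by (simp add: leq_def ad_idem)
lemma ltrans: "x\<in>A \<Longrightarrow> y\<in>A \<Longrightarrow> z\<in>A \<Longrightarrow> leq ad x y \<Longrightarrow> leq ad y z \<Longrightarrow> leq ad x z"
  unfolding leq_def by (metis ad_assoc)
lemma lanti: "x\<in>A \<Longrightarrow> y\<in>A \<Longrightarrow> leq ad x y \<Longrightarrow> leq ad y x \<Longrightarrow> x = y"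
  unfolding leq_def by (metis ad_comm)
lemma lub: "x\<in>A \<Longrightarrow> y\<in>A \<Longrightarrow> z\<in>A \<Longrightarrow> leq ad x z \<Longrightarrow> leq ad y z \<Longrightarrow> leq ad (ad x y) z"
  unfolding leq_def by (metis ad_assoc)
lemma ub1: "x\<in>A \<Longrightarrow> y\<in>A \<Longrightarrow> leq ad x (ad x y)"
  unfolding leq_def by (metis ad_assoc ad_idem)
lemma ub2: "x\<in>A \<Longrightarrow> y\<in>A \<Longrightarrow> leq ad y (ad x y)"
  unfolding leq_def by (metis ad_assoc ad_idem ad_comm)

lemma wv_in: "\<forall>v. \<sigma> v \<in> A \<Longrightarrow> w \<noteq> [] \<Longrightarrow> wv mu \<sigma> w \<in> A"
  by (induction w rule: induct_list012) (auto simp: cmu)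

lemma wv_app: "\<forall>v. \<sigma> v \<in> A \<Longrightarrow> u \<noteq> [] \<Longrightarrow> v \<noteq> [] \<Longrightarrow> wv mu \<sigma> (u@v) = mu (wv mu \<sigma> u) (wv mu \<sigma> v)"
proof (induction u)
  case Nil then show ?case by simp
next
  case (Cons x u)
  show ?case
  proof (cases "u = []")
    case True
    then show ?thesis using Cons.prems by (cases v) auto
  next
    case False
    then obtain y zs where u: "u = y#zs" by (cases u) auto
    obtain a bs where v: "v = a#bs" using Cons.prems by (cases v) auto
    have "wv mu \<sigma> ((x#u)@v) = mu (\<sigma> x) (wv mu \<sigma> (u@v))" using u by simp
    also have "\<dots> = mu (\<sigma> x) (mu (wv mu \<sigma> u) (wv mu \<sigma> v))" using Cons False by simp
    also have "\<dots> = mu (mu (\<sigma> x) (wv mu \<sigma> u)) (wv mu \<sigma> v)"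
      using Cons.prems False by (simp add: mu_assoc wv_in)
    also have "mu (\<sigma> x) (wv mu \<sigma> u) = wv mu \<sigma> (x#u)" using u by simp
    finally show ?thesis .
  qed
qed

lemma wvm_in: "\<forall>v. \<sigma> v \<in> A \<Longrightarrow> w \<in> set (mons t) \<Longrightarrow> wv mu \<sigma> w \<in> A"
  using wv_in mons_words by blast

lemma lsum_in: "\<forall>x\<in>set xs. x\<in>A \<Longrightarrow> xs\<noteq>[] \<Longrightarrow> lsum ad xs \<in> A"
  by (induction xs rule: induct_list012) (auto simp: cad)

lemma lsum_app: "xs\<noteq>[] \<Longrightarrow> ys\<noteq>[] \<Longrightarrow> \<forall>x\<in>set xs. x\<in>A \<Longrightarrow> \<forall>x\<in>set ys. x\<in>A \<Longrightarrow>
   lsum ad (xs@ys) = ad (lsum ad xs) (lsum ad ys)"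
proof (induction xs rule: induct_list012)
  case (2 x) then show ?case by (cases ys) auto
next
  case (3 x y zs)
  then show ?case by (simp add: ad_assoc lsum_in)
qed auto

lemma lsum_mr: "xs \<noteq> [] \<Longrightarrow> \<forall>x\<in>set xs. x\<in>A \<Longrightarrow> b\<in>A \<Longrightarrow>
   mu (lsum ad xs) b = lsum ad (map (\<lambda>x. mu x b) xs)"
  by (induction xs rule: induct_list012) (auto simp: distr lsum_in)

lemma lsum_ml: "xs \<noteq> [] \<Longrightarrow> \<forall>x\<in>set xs. x\<in>A \<Longrightarrow> b\<in>A \<Longrightarrow>
   mu b (lsum ad xs) = lsum ad (map (\<lambda>x. mu b x) xs)"
  by (induction xs rule: induct_list012) (auto simp: distl lsum_in)

lemma lsum_concat: "xss \<noteq> [] \<Longrightarrow> \<forall>xs\<in>set xss. xs \<noteq> [] \<and> (\<forall>x\<in>set xs. x\<in>A) \<Longrightarrow>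
   lsum ad (concat xss) = lsum ad (map (lsum ad) xss)"
proof (induction xss)
  case Nil then show ?case by simp
next
  case (Cons xs xss)
  show ?case
  proof (cases "xss = []")
    case True then show ?thesis by simp
  next
    case False
    then obtain ys yss where y: "xss = ys#yss" by (cases xss) auto
    have ne: "concat xss \<noteq> []" using Cons.prems y by simp
    have "lsum ad (concat (xs#xss)) = ad (lsum ad xs) (lsum ad (concat xss))"
      using Cons.prems ne by (simp add: lsum_app)
    also have "lsum ad (concat xss) = lsum ad (map (lsum ad) xss)" using Cons False by simp
    finally show ?thesis using y by simp
  qed
qed

lemma lsum_ub: "x \<in> set xs \<Longrightarrow> \<forall>x\<in>set xs. x\<in>A \<Longrightarrow> leq ad x (lsum ad xs)"
proof (induction xs rule: induct_list012)
  case (3 x0 y zs)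
  show ?case
  proof (cases "x = x0")
    case True then show ?thesis using 3 by (simp add: ub1 lsum_in)
  next
    case False
    then have "leq ad x (lsum ad (y#zs))" using 3 by simp
    moreover have "leq ad (lsum ad (y#zs)) (ad x0 (lsum ad (y#zs)))" using 3 by (simp add: ub2 lsum_in)
    moreover have "x \<in> A" "lsum ad (y#zs) \<in> A" "ad x0 (lsum ad (y#zs)) \<in> A"
      using 3 by (auto intro!: lsum_in cad)
    ultimately show ?thesis using ltrans[of x "lsum ad (y#zs)" "ad x0 (lsum ad (y#zs))"] by simp
  qed
qed (auto simp: lrefl)

lemma lsum_lub: "xs\<noteq>[] \<Longrightarrow> \<forall>x\<in>set xs. x\<in>A \<and> leq ad x a \<Longrightarrow> a\<in>A \<Longrightarrow> leq ad (lsum ad xs) a"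
  by (induction xs rule: induct_list012) (auto intro!: lub lsum_in)

lemma eval_in: "\<forall>v. \<sigma> v \<in> A \<Longrightarrow> eval ad mu \<sigma> t \<in> A"
  by (induction t) (auto simp: cad cmu)

lemma eval_lsum: "\<forall>v. \<sigma> v \<in> A \<Longrightarrow> eval ad mu \<sigma> t = lsum ad (map (wv mu \<sigma>) (mons t))"
proof (induction t)
  case (Var v) then show ?case by simp
next
  case (Add p q)
  have a: "\<forall>x\<in>set (map (wv mu \<sigma>) (mons t)). x \<in> A" for t
    using Add.prems by (auto simp: wvm_in)
  show ?case using Add lsum_app[OF _ _ a a, of p q] mons_ne[of p] mons_ne[of q] by simp
next
  case (Mul p q)
  let ?f = "wv mu \<sigma>" and ?P = "mons p" and ?Q = "mons q"
  have inA: "\<And>w t. w \<in> set (mons t) \<Longrightarrow> ?f w \<in> A" using Mul.prems wvm_in by blast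
  have "map ?f (mons (Mul p q)) = concat (map (\<lambda>u. map (\<lambda>v. mu (?f u) (?f v)) ?Q) ?P)"
    using Mul.prems mons_words[of _ p] mons_words[of _ q]
    by (simp add: map_concat) (intro arg_cong[where f=concat] map_cong refl, simp add: wv_app)
  moreover have "lsum ad (concat (map (\<lambda>u. map (\<lambda>v. mu (?f u) (?f v)) ?Q) ?P)) = lsum ad (map (\<lambda>u. lsum ad (map (\<lambda>v. mu (?f u) (?f v)) ?Q)) ?P)"
    apply (subst lsum_concat)
    using mons_ne[of p] mons_ne[of q] inA by (auto simp: cmu comp_def)
  ultimately have "lsum ad (map ?f (mons (Mul p q))) = lsum ad (map (\<lambda>u. lsum ad (map (\<lambda>v. mu (?f u) (?f v)) ?Q)) ?P)"
    by simp
  also have "\<dots> = lsum ad (map (\<lambda>u. mu (?f u) (lsum ad (map ?f ?Q))) ?P)"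
  proof (intro arg_cong[where f="lsum ad"] map_cong refl)
    fix u assume "u \<in> set ?P"
    then show "lsum ad (map (\<lambda>v. mu (?f u) (?f v)) ?Q) = mu (?f u) (lsum ad (map ?f ?Q))"
      using mons_ne[of q] inA lsum_ml[of "map ?f ?Q" "?f u"] by (simp add: comp_def)
  qed
  also have "\<dots> = mu (lsum ad (map ?f ?P)) (lsum ad (map ?f ?Q))"
    using mons_ne[of p] mons_ne[of q] inA lsum_mr[of "map ?f ?P" "lsum ad (map ?f ?Q)"] lsum_in[of "map ?f ?Q"]
    by (simp add: comp_def)
  finally show ?case using Mul by simp
qed

lemma eval_ub: "\<forall>v. \<sigma> v \<in> A \<Longrightarrow> w \<in> set (mons t) \<Longrightarrow> leq ad (wv mu \<sigma> w) (eval ad mu \<sigma> t)"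
proof -
  assume h: "\<forall>v. \<sigma> v \<in> A" "w \<in> set (mons t)"
  have a: "\<forall>x\<in>set (map (wv mu \<sigma>) (mons t)). x \<in> A"
    using h by (auto simp: wvm_in)
  show ?thesis using eval_lsum[of \<sigma> t] lsum_ub[OF _ a, of "wv mu \<sigma> w"] h by simp
qed

lemma eval_lub: "\<forall>v. \<sigma> v \<in> A \<Longrightarrow> a\<in>A \<Longrightarrow> \<forall>w\<in>set (mons t). leq ad (wv mu \<sigma> w) a \<Longrightarrow>
   leq ad (eval ad mu \<sigma> t) a"
proof -
  assume h: "\<forall>v. \<sigma> v \<in> A" "a\<in>A" "\<forall>w\<in>set (mons t). leq ad (wv mu \<sigma> w) a"
  have a: "\<forall>x\<in>set (map (wv mu \<sigma>) (mons t)). x \<in> A \<and> leq ad x a"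
    using h by (auto simp: wvm_in)
  have "map (wv mu \<sigma>) (mons t) \<noteq> []" using mons_ne by simp
  then show ?thesis using eval_lsum[OF h(1), of t] lsum_lub[OF _ a h(2)] by simp
qed

end



definition bigc :: "'v list list \<Rightarrow> 'v set" where
  "bigc P = {y. \<exists>u\<in>set P. length u \<ge> 2 \<and> y \<in> set u}"

locale aisr5 = aisr +
  assumes comm: "x\<in>A \<Longrightarrow> y\<in>A \<Longrightarrow> mu x y = mu y x"
    and sq: "x\<in>A \<Longrightarrow> y\<in>A \<Longrightarrow> mu (mu x x) y = mu x y"
    and sq2: "x\<in>A \<Longrightarrow> mu x x = ad (mu x x) x"
    and i4: "x\<in>A \<Longrightarrow> y\<in>A \<Longrightarrow> z\<in>A \<Longrightarrow>
      ad x (mu (mu x y) z) = ad (ad x (mu (mu x y) z)) (mu x y)"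
    and i5: "x\<in>A \<Longrightarrow> y\<in>A \<Longrightarrow> z\<in>A \<Longrightarrow> w\<in>A \<Longrightarrow>
      ad (mu x y) (mu z w) = ad (ad (mu x y) (mu z w)) (mu (mu (mu x y) z) w)"
begin

lemma i4': "x\<in>A \<Longrightarrow> y\<in>A \<Longrightarrow> z\<in>A \<Longrightarrow> s\<in>A \<Longrightarrow> leq ad x s \<Longrightarrow> leq ad (mu (mu x y) z) s \<Longrightarrow>
  leq ad (mu x y) s"
proof -
  assume h: "x\<in>A" "y\<in>A" "z\<in>A" "s\<in>A" "leq ad x s" "leq ad (mu (mu x y) z) s"
  let ?m = "mu (mu x y) z"
  have mA: "?m \<in> A" "mu x y \<in> A" "ad x ?m \<in> A" using h by (auto intro!: cmu cad)
  have "leq ad (mu x y) (ad x ?m)" unfolding leq_def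
    using i4[OF h(1-3)] ad_comm[of "mu x y" "ad x ?m"] mA by simp
  moreover have "leq ad (ad x ?m) s" using h mA by (intro lub) auto
  ultimately show ?thesis using ltrans mA h by blast
qed

lemma i5': "x\<in>A \<Longrightarrow> y\<in>A \<Longrightarrow> z\<in>A \<Longrightarrow> w\<in>A \<Longrightarrow> s\<in>A \<Longrightarrow> leq ad (mu x y) s \<Longrightarrow> leq ad (mu z w) s \<Longrightarrow>
  leq ad (mu (mu (mu x y) z) w) s"
proof -
  assume h: "x\<in>A" "y\<in>A" "z\<in>A" "w\<in>A" "s\<in>A" "leq ad (mu x y) s" "leq ad (mu z w) s"
  let ?m = "mu (mu (mu x y) z) w"
  have mA: "?m \<in> A" "mu x y \<in> A" "mu z w \<in> A" "ad (mu x y) (mu z w) \<in> A" using h by (auto intro!: cmu cad)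
  have "leq ad ?m (ad (mu x y) (mu z w))" unfolding leq_def
    using i5[OF h(1-4)] ad_comm[of ?m "ad (mu x y) (mu z w)"] mA by simp
  moreover have "leq ad (ad (mu x y) (mu z w)) s" using h mA by (intro lub) auto
  ultimately show ?thesis using ltrans mA h by blast
qed

lemma L1: "\<forall>v. \<sigma> v \<in> A \<Longrightarrow> length w \<ge> 2 \<Longrightarrow> y \<in> set w \<Longrightarrow> mu (\<sigma> y) (wv mu \<sigma> w) = wv mu \<sigma> w"
proof (induction w rule: induct_list012)
  case (3 x z zs)
  let ?s = "wv mu \<sigma> (z#zs)"
  have sA: "?s \<in> A" using 3 wv_in by blast
  have xA: "\<sigma> x \<in> A" "\<sigma> y \<in> A" using 3 by auto
  show ?case
  proof (cases "y = x")
    case True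
    then show ?thesis using sA xA by (simp add: mu_assoc[symmetric] sq)
  next
    case False
    then have yin: "y \<in> set (z#zs)" using 3 by simp
    show ?thesis
    proof (cases "zs = []")
      case True
      then have "y = z" using yin by simp
      have "mu (\<sigma> y) (mu (\<sigma> x) (\<sigma> y)) = mu (\<sigma> y) (mu (\<sigma> y) (\<sigma> x))" using xA comm by simp
      also have "\<dots> = mu (mu (\<sigma> y) (\<sigma> y)) (\<sigma> x)" using xA mu_assoc by simp
      also have "\<dots> = mu (\<sigma> x) (\<sigma> y)" using xA sq comm by simp
      finally show ?thesis using True \<open>y = z\<close> by simp
    next
      case False
      then have "mu (\<sigma> y) ?s = ?s" using 3 yin by (cases zs) auto
      moreover have "mu (\<sigma> y) (mu (\<sigma> x) ?s) = mu (mu (\<sigma> y) (\<sigma> x)) ?s" using sA xA mu_assoc by simp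
      moreover have "mu (\<sigma> y) (\<sigma> x) = mu (\<sigma> x) (\<sigma> y)" using xA comm by simp
      moreover have "mu (mu (\<sigma> x) (\<sigma> y)) ?s = mu (\<sigma> x) (mu (\<sigma> y) ?s)" using sA xA mu_assoc by simp
      ultimately show ?thesis by simp
    qed
  qed
qed auto

lemma L2: "\<forall>v. \<sigma> v \<in> A \<Longrightarrow> length w \<ge> 2 \<Longrightarrow> u \<noteq> [] \<Longrightarrow> set u \<subseteq> set w \<Longrightarrow>
   mu (wv mu \<sigma> u) (wv mu \<sigma> w) = wv mu \<sigma> w"
proof (induction u rule: induct_list012)
  case (2 x) then show ?case using L1 by simp
next
  case (3 x y zs)
  have "mu (wv mu \<sigma> (y#zs)) (wv mu \<sigma> w) = wv mu \<sigma> w" using 3 by simp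
  moreover have "\<sigma> x \<in> A" "w \<noteq> []" using 3 by auto
  ultimately show ?case using 3 L1[of \<sigma> w x] wv_in[of \<sigma> "y#zs"] wv_in[of \<sigma> w]
    by (simp add: mu_assoc)
qed auto

lemma L3: "\<forall>v. \<sigma> v \<in> A \<Longrightarrow> length w \<ge> 2 \<Longrightarrow> length u \<ge> 2 \<Longrightarrow> set u = set w \<Longrightarrow>
   wv mu \<sigma> u = wv mu \<sigma> w"
proof -
  assume h: "\<forall>v. \<sigma> v \<in> A" "length w \<ge> 2" "length u \<ge> 2" "set u = set w"
  then have ne: "u \<noteq> []" "w \<noteq> []" by auto
  have "wv mu \<sigma> u = mu (wv mu \<sigma> w) (wv mu \<sigma> u)" using L2[of \<sigma> u w] h ne by simp
  also have "\<dots> = mu (wv mu \<sigma> u) (wv mu \<sigma> w)" using comm wv_in[OF h(1) ne(1)] wv_in[OF h(1) ne(2)] by simp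
  also have "\<dots> = wv mu \<sigma> w" using L2[of \<sigma> w u] h ne by simp
  finally show ?thesis .
qed

lemma D2: "\<forall>v. \<sigma> v \<in> A \<Longrightarrow> length u \<ge> 2 \<Longrightarrow> set u = {x} \<Longrightarrow> s \<in> A \<Longrightarrow> leq ad (wv mu \<sigma> u) s \<Longrightarrow>
   leq ad (\<sigma> x) s"
proof -
  assume h: "\<forall>v. \<sigma> v \<in> A" "length u \<ge> 2" "set u = {x}" "s \<in> A" "leq ad (wv mu \<sigma> u) s"
  have "wv mu \<sigma> u = wv mu \<sigma> [x,x]" using h by (intro L3) auto
  then have e: "wv mu \<sigma> u = mu (\<sigma> x) (\<sigma> x)" by simp
  have xA: "\<sigma> x \<in> A" "mu (\<sigma> x) (\<sigma> x) \<in> A" using h by (auto intro: cmu)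
  have "leq ad (\<sigma> x) (mu (\<sigma> x) (\<sigma> x))" unfolding leq_def using sq2[of "\<sigma> x"] xA
    ad_comm[of "\<sigma> x" "mu (\<sigma> x) (\<sigma> x)"] by simp
  then show ?thesis using h e xA ltrans[of "\<sigma> x" "mu (\<sigma> x) (\<sigma> x)" s] by simp
qed

lemma D3: "\<forall>v. \<sigma> v \<in> A \<Longrightarrow> length u \<ge> 2 \<Longrightarrow> length v \<ge> 2 \<Longrightarrow> s \<in> A \<Longrightarrow>
  leq ad (wv mu \<sigma> u) s \<Longrightarrow> leq ad (wv mu \<sigma> v) s \<Longrightarrow> leq ad (wv mu \<sigma> (u@v)) s"
proof -
  assume h: "\<forall>v. \<sigma> v \<in> A" "length u \<ge> 2" "length v \<ge> 2" "s \<in> A"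
    "leq ad (wv mu \<sigma> u) s" "leq ad (wv mu \<sigma> v) s"
  obtain x u' where u0: "u = x#u'" using h(2) by (cases u) auto
  then have u: "u = x#u'" "u' \<noteq> []" using h(2) by auto
  obtain z v' where v0: "v = z#v'" using h(3) by (cases v) auto
  then have v: "v = z#v'" "v' \<noteq> []" using h(3) by auto
  have wu: "wv mu \<sigma> u = mu (\<sigma> x) (wv mu \<sigma> u')" using u by (cases u') auto
  have wv': "wv mu \<sigma> v = mu (\<sigma> z) (wv mu \<sigma> v')" using v by (cases v') auto
  have A: "\<sigma> x \<in> A" "\<sigma> z \<in> A" "wv mu \<sigma> u' \<in> A" "wv mu \<sigma> v' \<in> A"
    using h u v wv_in by auto
  have "wv mu \<sigma> (u@v) = mu (wv mu \<sigma> u) (wv mu \<sigma> v)" using wv_app[OF h(1), of u v] u(2) v(2) unfolding u(1) v(1) by blast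
  also have "\<dots> = mu (mu (mu (\<sigma> x) (wv mu \<sigma> u')) (\<sigma> z)) (wv mu \<sigma> v')"
    using wu wv' A by (simp add: mu_assoc cmu)
  finally show ?thesis using i5'[OF A(1) A(3) A(2) A(4) h(4)] h wu wv' by simp
qed


lemma D4: "\<forall>v. \<sigma> v \<in> A \<Longrightarrow> ys \<noteq> [] \<Longrightarrow> set ys \<subseteq> bigc (mons p) \<Longrightarrow>
  \<exists>F. length F \<ge> 2 \<and> set ys \<subseteq> set F \<and> leq ad (wv mu \<sigma> F) (eval ad mu \<sigma> p)"
proof (induction ys)
  case Nil then show ?case by simp
next
  case (Cons y ys)
  obtain u where u: "u \<in> set (mons p)" "length u \<ge> 2" "y \<in> set u"
    using Cons.prems unfolding bigc_def by auto
  have lu: "leq ad (wv mu \<sigma> u) (eval ad mu \<sigma> p)" using u Cons.prems eval_ub by blast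
  show ?case
  proof (cases "ys = []")
    case True then show ?thesis using u lu by auto
  next
    case False
    then obtain F where F: "length F \<ge> 2" "set ys \<subseteq> set F" "leq ad (wv mu \<sigma> F) (eval ad mu \<sigma> p)"
      using Cons by auto
    have "leq ad (wv mu \<sigma> (u@F)) (eval ad mu \<sigma> p)"
      using D3 u F lu Cons.prems eval_in by blast
    then show ?thesis using u F by (intro exI[of _ "u@F"]) auto
  qed
qed

lemma D5: "\<forall>v. \<sigma> v \<in> A \<Longrightarrow> length w \<ge> 2 \<Longrightarrow> set w \<subseteq> bigc (mons p) \<Longrightarrow> x \<in> set w \<Longrightarrow>
  [x] \<in> set (mons p) \<Longrightarrow> leq ad (wv mu \<sigma> w) (eval ad mu \<sigma> p)"
proof -
  assume h: "\<forall>v. \<sigma> v \<in> A" "length w \<ge> 2" "set w \<subseteq> bigc (mons p)" "x \<in> set w" "[x] \<in> set (mons p)"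
  have wne: "w \<noteq> []" using h by auto
  obtain F where F: "length F \<ge> 2" "set w \<subseteq> set F" "leq ad (wv mu \<sigma> F) (eval ad mu \<sigma> p)"
    using D4[OF h(1) wne h(3)] by blast
  have "F \<noteq> []" using F by auto
  then have A: "\<sigma> x \<in> A" "wv mu \<sigma> w \<in> A" "wv mu \<sigma> F \<in> A" "eval ad mu \<sigma> p \<in> A"
    using h wne wv_in[OF h(1)] eval_in[OF h(1)] by auto
  have lx: "leq ad (\<sigma> x) (eval ad mu \<sigma> p)" using eval_ub[OF h(1) h(5)] by simp
  have e1: "mu (wv mu \<sigma> w) (wv mu \<sigma> F) = wv mu \<sigma> F" using L2[OF h(1) F(1) wne F(2)] .
  have e2: "mu (\<sigma> x) (wv mu \<sigma> F) = wv mu \<sigma> F" using L1[OF h(1) F(1)] h(4) F(2) by blast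
  have e3: "mu (\<sigma> x) (wv mu \<sigma> w) = wv mu \<sigma> w" using L1[OF h(1) h(2) h(4)] .
  have "mu (mu (\<sigma> x) (wv mu \<sigma> w)) (wv mu \<sigma> F) = wv mu \<sigma> F"
    using A e1 e2 by (simp add: mu_assoc)
  then show ?thesis using i4'[OF A(1) A(2) A(3) A(4) lx] F e3 by simp
qed

lemma D6: "\<forall>v. \<sigma> v \<in> A \<Longrightarrow> length w \<ge> 2 \<Longrightarrow> set w \<subseteq> bigc (mons p) \<Longrightarrow> u \<in> set (mons p) \<Longrightarrow>
  length u \<ge> 2 \<Longrightarrow> set u \<subseteq> set w \<Longrightarrow> leq ad (wv mu \<sigma> w) (eval ad mu \<sigma> p)"
proof -
  assume h: "\<forall>v. \<sigma> v \<in> A" "length w \<ge> 2" "set w \<subseteq> bigc (mons p)" "u \<in> set (mons p)"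
    "length u \<ge> 2" "set u \<subseteq> set w"
  have wne: "w \<noteq> []" "u \<noteq> []" using h by auto
  obtain F where F: "length F \<ge> 2" "set w \<subseteq> set F" "leq ad (wv mu \<sigma> F) (eval ad mu \<sigma> p)"
    using D4[OF h(1) wne(1) h(3)] by blast
  have "F \<noteq> []" using F by auto
  then have A: "wv mu \<sigma> u \<in> A" "wv mu \<sigma> w \<in> A" "wv mu \<sigma> F \<in> A" "eval ad mu \<sigma> p \<in> A"
    using wne wv_in[OF h(1)] eval_in[OF h(1)] by auto
  have lu: "leq ad (wv mu \<sigma> u) (eval ad mu \<sigma> p)" using eval_ub[OF h(1) h(4)] by simp
  have e1: "mu (wv mu \<sigma> w) (wv mu \<sigma> F) = wv mu \<sigma> F" using L2[OF h(1) F(1) wne(1) F(2)] .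
  have e2: "mu (wv mu \<sigma> u) (wv mu \<sigma> F) = wv mu \<sigma> F" using L2[OF h(1) F(1) wne(2)] h(6) F(2) by blast
  have e3: "mu (wv mu \<sigma> u) (wv mu \<sigma> w) = wv mu \<sigma> w" using L2[OF h(1) h(2) wne(2) h(6)] .
  have "mu (mu (wv mu \<sigma> u) (wv mu \<sigma> w)) (wv mu \<sigma> F) = wv mu \<sigma> F"
    using A e1 e2 by (simp add: mu_assoc)
  then show ?thesis using i4'[OF A(1) A(2) A(3) A(4) lu] F e3 by simp
qed

end



lemma S4_ai: "ai_semiring UNIV add4 mul4"
proof -
  have "\<forall>x y z. add4 (add4 x y) z = add4 x (add4 y z) \<and> add4 x y = add4 y x \<and> add4 x x = x \<and>
        mul4 (mul4 x y) z = mul4 x (mul4 y z) \<and>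
        mul4 x (add4 y z) = add4 (mul4 x y) (mul4 x z) \<and>
        mul4 (add4 x y) z = add4 (mul4 x z) (mul4 y z)"
    by (intro allI; case_tac x; case_tac y; case_tac z; simp)
  then show ?thesis unfolding ai_semiring_def closed_alg_def by blast
qed

interpretation S4: aisr UNIV add4 mul4 by unfold_locales (rule S4_ai)

definition cls :: "('v \<Rightarrow> s4) \<Rightarrow> 'v list \<Rightarrow> s4" where
  "cls \<tau> w = (if \<forall>v\<in>set w. \<tau> v = E2 then E2 else if \<forall>v\<in>set w. \<tau> v = E1 \<or> \<tau> v = E4 then E1 else E3)"

lemma wv4: "length w \<ge> 2 \<Longrightarrow> wv mul4 \<tau> w = cls \<tau> w"
proof (induction w rule: induct_list012)
  case (3 x y zs)
  show ?case
  proof (cases "zs = []")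
    case True then show ?thesis by (cases "\<tau> x"; cases "\<tau> y"; simp add: cls_def)
  next
    case False
    then have "wv mul4 \<tau> (y#zs) = cls \<tau> (y#zs)" using 3 by (cases zs) auto
    then show ?thesis
      by (cases "\<tau> x"; cases "\<forall>v\<in>set (y#zs). \<tau> v = E2"; cases "\<forall>v\<in>set (y#zs). \<tau> v = E1 \<or> \<tau> v = E4";
          simp add: cls_def; fastforce)
  qed
qed auto

lemma leq4: "leq add4 E4 E3 = False" "leq add4 E1 E3 = False" "leq add4 E1 E4 = False" "leq add4 E3 E4 = False"
  "leq add4 E2 a" "leq add4 E4 E4" "leq add4 E3 E3"
  by (auto simp: leq_def) (cases a; simp)

lemma Na: assumes H: "\<forall>\<tau>. leq add4 (wv mul4 \<tau> [x]) (eval add4 mul4 \<tau> p)"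
  shows "[x] \<in> set (mons p) \<or> (\<exists>u\<in>set (mons p). length u \<ge> 2 \<and> set u = {x})"
proof (rule ccontr)
  assume n: "\<not> ?thesis"
  define \<tau> where "\<tau> = (\<lambda>v. if v = x then E4 else E2)"
  have "\<forall>u\<in>set (mons p). leq add4 (wv mul4 \<tau> u) E3"
  proof
    fix u assume u: "u \<in> set (mons p)"
    then have une: "u \<noteq> []" by (rule mons_words)
    show "leq add4 (wv mul4 \<tau> u) E3"
    proof (cases "length u \<ge> 2")
      case True
      have "\<not> (\<forall>v\<in>set u. \<tau> v = E1 \<or> \<tau> v = E4)"
      proof
        assume "\<forall>v\<in>set u. \<tau> v = E1 \<or> \<tau> v = E4"
        then have "\<forall>v\<in>set u. v = x" by (auto simp: \<tau>_def split: if_splits)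
        then have "set u = {x}" using une by (cases u) auto
        then show False using n u True by blast
      qed
      then show ?thesis using True by (auto simp: wv4 cls_def leq4)
    next
      case False
      then obtain z where "u = [z]" using une by (cases u; cases "tl u") auto
      then show ?thesis using n u by (auto simp: \<tau>_def leq4)
    qed
  qed
  then have "leq add4 (eval add4 mul4 \<tau> p) E3" by (intro S4.eval_lub) auto
  moreover have "leq add4 E4 (eval add4 mul4 \<tau> p)" using H[rule_format, of \<tau>] by (simp add: \<tau>_def)
  ultimately have "leq add4 E4 E3" using S4.ltrans by blast
  then show False by (simp add: leq4)
qed

lemma Nb1: assumes H: "\<forall>\<tau>. leq add4 (wv mul4 \<tau> w) (eval add4 mul4 \<tau> p)" and L: "length w \<ge> 2"
  shows "set w \<subseteq> bigc (mons p)"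
proof (rule ccontr)
  let ?U = "bigc (mons p)"
  assume "\<not> ?thesis"
  then obtain y where y: "y \<in> set w" "y \<notin> ?U" by auto
  define \<tau> where "\<tau> = (\<lambda>v. if v \<in> ?U then E2 else E4)"
  have "\<forall>u\<in>set (mons p). leq add4 (wv mul4 \<tau> u) E4"
  proof
    fix u assume u: "u \<in> set (mons p)"
    then have une: "u \<noteq> []" by (rule mons_words)
    show "leq add4 (wv mul4 \<tau> u) E4"
    proof (cases "length u \<ge> 2")
      case True
      then have "\<forall>v\<in>set u. \<tau> v = E2" using u by (auto simp: \<tau>_def bigc_def)
      then show ?thesis using True by (simp add: wv4 cls_def leq4)
    next
      case False
      then obtain z where "u = [z]" using une by (cases u; cases "tl u") auto
      then show ?thesis by (auto simp: \<tau>_def leq4)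
    qed
  qed
  then have "leq add4 (eval add4 mul4 \<tau> p) E4" by (intro S4.eval_lub) auto
  moreover have "leq add4 (wv mul4 \<tau> w) (eval add4 mul4 \<tau> p)" using H by simp
  ultimately have "leq add4 (wv mul4 \<tau> w) E4" using S4.ltrans by blast
  moreover have "wv mul4 \<tau> w = E1 \<or> wv mul4 \<tau> w = E3"
    using L y by (auto simp: wv4 cls_def \<tau>_def)
  ultimately show False by (auto simp: leq4)
qed

lemma Nb2: assumes H: "\<forall>\<tau>. leq add4 (wv mul4 \<tau> w) (eval add4 mul4 \<tau> p)" and L: "length w \<ge> 2"
  shows "(\<exists>u\<in>set (mons p). length u \<ge> 2 \<and> set u \<subseteq> set w) \<or> (\<exists>x\<in>set w. [x] \<in> set (mons p))"
proof (rule ccontr)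
  assume n: "\<not> ?thesis"
  define \<tau> where "\<tau> = (\<lambda>v. if v \<in> set w then E4 else E2)"
  have "\<forall>u\<in>set (mons p). leq add4 (wv mul4 \<tau> u) E3"
  proof
    fix u assume u: "u \<in> set (mons p)"
    then have une: "u \<noteq> []" by (rule mons_words)
    show "leq add4 (wv mul4 \<tau> u) E3"
    proof (cases "length u \<ge> 2")
      case True
      then obtain v where "v \<in> set u" "v \<notin> set w" using n u by blast
      then have "\<not> (\<forall>v\<in>set u. \<tau> v = E1 \<or> \<tau> v = E4)" by (auto simp: \<tau>_def)
      then show ?thesis using True by (auto simp: wv4 cls_def leq4)
    next
      case False
      then obtain z where "u = [z]" using une by (cases u; cases "tl u") auto
      then show ?thesis using n u by (auto simp: \<tau>_def leq4)
    qed
  qed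
  then have "leq add4 (eval add4 mul4 \<tau> p) E3" by (intro S4.eval_lub) auto
  moreover have "leq add4 (wv mul4 \<tau> w) (eval add4 mul4 \<tau> p)" using H by simp
  ultimately have "leq add4 (wv mul4 \<tau> w) E3" using S4.ltrans by blast
  moreover have "wv mul4 \<tau> w = E1"
    using L by (cases w) (auto simp: wv4 cls_def \<tau>_def)
  ultimately show False by (auto simp: leq4)
qed

context aisr5
begin

lemma dir: assumes s: "\<forall>v. \<sigma> v \<in> A" and sat: "satisfies (UNIV::s4 set) add4 mul4 q p"
  shows "leq ad (eval ad mu \<sigma> q) (eval ad mu \<sigma> (p :: nat trm))"
proof (rule eval_lub[OF s eval_in[OF s]], intro ballI)
  fix w assume w: "w \<in> set (mons q)"
  have H: "\<forall>\<tau>. leq add4 (wv mul4 \<tau> w) (eval add4 mul4 \<tau> p)"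
  proof
    fix \<tau> :: "nat \<Rightarrow> s4"
    have "leq add4 (wv mul4 \<tau> w) (eval add4 mul4 \<tau> q)" using S4.eval_ub w by simp
    then show "leq add4 (wv mul4 \<tau> w) (eval add4 mul4 \<tau> p)" using sat by (simp add: satisfies_def)
  qed
  have wne: "w \<noteq> []" using w by (rule mons_words)
  have eA: "eval ad mu \<sigma> p \<in> A" using eval_in[OF s] .
  show "leq ad (wv mu \<sigma> w) (eval ad mu \<sigma> p)"
  proof (cases "length w \<ge> 2")
    case False
    then obtain x where x: "w = [x]" using wne by (cases w; cases "tl w") auto
    from Na[of x p] H x
    have "[x] \<in> set (mons p) \<or> (\<exists>u\<in>set (mons p). length u \<ge> 2 \<and> set u = {x})" by simp
    then show ?thesis
    proof
      assume "[x] \<in> set (mons p)"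
      from eval_ub[OF s this] show ?thesis using x by simp
    next
      assume "\<exists>u\<in>set (mons p). length u \<ge> 2 \<and> set u = {x}"
      then obtain u where u: "u \<in> set (mons p)" "length u \<ge> 2" "set u = {x}" by blast
      show ?thesis using D2[OF s u(2) u(3) eA eval_ub[OF s u(1)]] x by simp
    qed
  next
    case True
    have U: "set w \<subseteq> bigc (mons p)" using Nb1[OF H True] .
    from Nb2[OF H True] show ?thesis
    proof
      assume "\<exists>u\<in>set (mons p). length u \<ge> 2 \<and> set u \<subseteq> set w"
      then obtain u where "u \<in> set (mons p)" "length u \<ge> 2" "set u \<subseteq> set w" by blast
      then show ?thesis using D6[OF s True U] by blast
    next
      assume "\<exists>x\<in>set w. [x] \<in> set (mons p)"
      then obtain x where "x \<in> set w" "[x] \<in> set (mons p)" by blast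
      then show ?thesis using D5[OF s True U] by blast
    qed
  qed
qed

end




definition asg :: "'a \<Rightarrow> 'a \<Rightarrow> 'a \<Rightarrow> 'a \<Rightarrow> nat \<Rightarrow> 'a" where
  "asg x y z w = (\<lambda>v. if v = 0 then x else if v = 1 then y else if v = 2 then z else w)"

lemma sat_inst: "satisfies A ad mu p q \<Longrightarrow> x\<in>A \<Longrightarrow> y\<in>A \<Longrightarrow> z\<in>A \<Longrightarrow> w\<in>A \<Longrightarrow>
  eval ad mu (asg x y z w) p = eval ad mu (asg x y z w) q"
  unfolding satisfies_def asg_def by auto

lemma s4sat:
  "satisfies (UNIV::s4 set) add4 mul4 (Add (Add (Var (0::nat)) (Var 1)) (Var 2)) (Add (Var 0) (Add (Var 1) (Var 2)))"
  "satisfies (UNIV::s4 set) add4 mul4 (Add (Var (0::nat)) (Var 1)) (Add (Var 1) (Var 0))"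
  "satisfies (UNIV::s4 set) add4 mul4 (Add (Var (0::nat)) (Var 0)) (Var 0)"
  "satisfies (UNIV::s4 set) add4 mul4 (Mul (Mul (Var (0::nat)) (Var 1)) (Var 2)) (Mul (Var 0) (Mul (Var 1) (Var 2)))"
  "satisfies (UNIV::s4 set) add4 mul4 (Mul (Var (0::nat)) (Add (Var 1) (Var 2))) (Add (Mul (Var 0) (Var 1)) (Mul (Var 0) (Var 2)))"
  "satisfies (UNIV::s4 set) add4 mul4 (Mul (Add (Var (0::nat)) (Var 1)) (Var 2)) (Add (Mul (Var 0) (Var 2)) (Mul (Var 1) (Var 2)))"
  "satisfies (UNIV::s4 set) add4 mul4 (Mul (Var (0::nat)) (Var 1)) (Mul (Var 1) (Var 0))"
  "satisfies (UNIV::s4 set) add4 mul4 (Mul (Mul (Var (0::nat)) (Var 0)) (Var 1)) (Mul (Var 0) (Var 1))"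
  "satisfies (UNIV::s4 set) add4 mul4 (Mul (Var (0::nat)) (Var 0)) (Add (Mul (Var 0) (Var 0)) (Var 0))"
  "satisfies (UNIV::s4 set) add4 mul4
      (Add (Var (0::nat)) (Mul (Mul (Var 0) (Var 1)) (Var 2)))
      (Add (Add (Var 0) (Mul (Mul (Var 0) (Var 1)) (Var 2))) (Mul (Var 0) (Var 1)))"
  "satisfies (UNIV::s4 set) add4 mul4
      (Add (Mul (Var (0::nat)) (Var 1)) (Mul (Var 2) (Var 3)))
      (Add (Add (Mul (Var 0) (Var 1)) (Mul (Var 2) (Var 3)))
           (Mul (Mul (Mul (Var 0) (Var 1)) (Var 2)) (Var 3)))"
  apply (unfold satisfies_def)
  apply (intro allI impI; simp only: eval.simps; case_tac "\<sigma> 0"; case_tac "\<sigma> 1"; case_tac "\<sigma> 2"; case_tac "\<sigma> 3"; simp)+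
  done

lemma fwd:
  fixes A :: "'a set" and ad mu :: "'a \<Rightarrow> 'a \<Rightarrow> 'a"
  assumes "in_V_S4 A ad mu"
  shows "ai_semiring A ad mu \<and>
    satisfies A ad mu (Mul (Var (0::nat)) (Var 1)) (Mul (Var 1) (Var 0)) \<and>
    satisfies A ad mu (Mul (Mul (Var (0::nat)) (Var 0)) (Var 1)) (Mul (Var 0) (Var 1)) \<and>
    satisfies A ad mu (Mul (Var (0::nat)) (Var 0)) (Add (Mul (Var 0) (Var 0)) (Var 0)) \<and>
    satisfies A ad mu
      (Add (Var (0::nat)) (Mul (Mul (Var 0) (Var 1)) (Var 2)))
      (Add (Add (Var 0) (Mul (Mul (Var 0) (Var 1)) (Var 2))) (Mul (Var 0) (Var 1))) \<and>
    satisfies A ad mu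
      (Add (Mul (Var (0::nat)) (Var 1)) (Mul (Var 2) (Var 3)))
      (Add (Add (Mul (Var 0) (Var 1)) (Mul (Var 2) (Var 3)))
           (Mul (Mul (Mul (Var 0) (Var 1)) (Var 2)) (Var 3)))"
proof -
  note h = assms
  have cl: "closed_alg A ad mu" using h unfolding in_V_S4_def by blast
  have tr: "\<And>p q. satisfies (UNIV::s4 set) add4 mul4 p q \<Longrightarrow> satisfies A ad mu (p::nat trm) q"
    using h unfolding in_V_S4_def by blast
  note S = tr[OF s4sat(1)] tr[OF s4sat(2)] tr[OF s4sat(3)] tr[OF s4sat(4)] tr[OF s4sat(5)] tr[OF s4sat(6)]
  have "ai_semiring A ad mu"
    unfolding ai_semiring_def
  proof (intro conjI cl ballI)
    fix x y z assume xyz: "x \<in> A" "y \<in> A" "z \<in> A"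
    show "ad (ad x y) z = ad x (ad y z)" using sat_inst[OF S(1) xyz xyz(1)] by (simp add: asg_def)
    show "ad x y = ad y x" using sat_inst[OF S(2) xyz xyz(1)] by (simp add: asg_def)
    show "ad x x = x" using sat_inst[OF S(3) xyz xyz(1)] by (simp add: asg_def)
    show "mu (mu x y) z = mu x (mu y z)" using sat_inst[OF S(4) xyz xyz(1)] by (simp add: asg_def)
    show "mu x (ad y z) = ad (mu x y) (mu x z)" using sat_inst[OF S(5) xyz xyz(1)] by (simp add: asg_def)
    show "mu (ad x y) z = ad (mu x z) (mu y z)" using sat_inst[OF S(6) xyz xyz(1)] by (simp add: asg_def)
  qed
  then show ?thesis using tr[OF s4sat(7)] tr[OF s4sat(8)] tr[OF s4sat(9)] tr[OF s4sat(10)] tr[OF s4sat(11)]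
    by simp
qed

lemma bwd:
  fixes A :: "'a set" and ad mu :: "'a \<Rightarrow> 'a \<Rightarrow> 'a"
  assumes "ai_semiring A ad mu \<and>
    satisfies A ad mu (Mul (Var (0::nat)) (Var 1)) (Mul (Var 1) (Var 0)) \<and>
    satisfies A ad mu (Mul (Mul (Var (0::nat)) (Var 0)) (Var 1)) (Mul (Var 0) (Var 1)) \<and>
    satisfies A ad mu (Mul (Var (0::nat)) (Var 0)) (Add (Mul (Var 0) (Var 0)) (Var 0)) \<and>
    satisfies A ad mu
      (Add (Var (0::nat)) (Mul (Mul (Var 0) (Var 1)) (Var 2)))
      (Add (Add (Var 0) (Mul (Mul (Var 0) (Var 1)) (Var 2))) (Mul (Var 0) (Var 1))) \<and>
    satisfies A ad mu
      (Add (Mul (Var (0::nat)) (Var 1)) (Mul (Var 2) (Var 3)))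
      (Add (Add (Mul (Var 0) (Var 1)) (Mul (Var 2) (Var 3)))
           (Mul (Mul (Mul (Var 0) (Var 1)) (Var 2)) (Var 3)))"
  shows "in_V_S4 A ad mu"
proof -
  note h = assms
  then have ai: "ai_semiring A ad mu" by simp
  interpret aisr A ad mu by unfold_locales (rule ai)
  note s1 = h[THEN conjunct2, THEN conjunct1]
  note s2 = h[THEN conjunct2, THEN conjunct2, THEN conjunct1]
  note s3 = h[THEN conjunct2, THEN conjunct2, THEN conjunct2, THEN conjunct1]
  note s4 = h[THEN conjunct2, THEN conjunct2, THEN conjunct2, THEN conjunct2, THEN conjunct1]
  note s5 = h[THEN conjunct2, THEN conjunct2, THEN conjunct2, THEN conjunct2, THEN conjunct2]
  interpret aisr5 A ad mu
  proof unfold_locales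
    fix x y z w assume xyz: "x \<in> A" "y \<in> A"
    show "mu x y = mu y x" using sat_inst[OF s1 xyz(1) xyz(2) xyz(1) xyz(1)] by (simp add: asg_def)
    show "mu (mu x x) y = mu x y" using sat_inst[OF s2 xyz(1) xyz(2) xyz(1) xyz(1)] by (simp add: asg_def)
  next
    fix x assume "x \<in> A"
    then show "mu x x = ad (mu x x) x" using sat_inst[OF s3 \<open>x\<in>A\<close> \<open>x\<in>A\<close> \<open>x\<in>A\<close> \<open>x\<in>A\<close>] by (simp add: asg_def)
  next
    fix x y z assume xyz: "x \<in> A" "y \<in> A" "z \<in> A"
    then show "ad x (mu (mu x y) z) = ad (ad x (mu (mu x y) z)) (mu x y)"
      using sat_inst[OF s4 xyz xyz(1)] by (simp add: asg_def)
  next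
    fix x y z w assume xyz: "x \<in> A" "y \<in> A" "z \<in> A" "w \<in> A"
    then show "ad (mu x y) (mu z w) = ad (ad (mu x y) (mu z w)) (mu (mu (mu x y) z) w)"
      using sat_inst[OF s5 xyz] by (simp add: asg_def)
  qed
  have cl: "closed_alg A ad mu" using ai unfolding ai_semiring_def by blast
  show ?thesis
    unfolding in_V_S4_def
  proof (intro conjI cl allI impI)
    fix p q :: "nat trm"
    assume s: "satisfies (UNIV::s4 set) add4 mul4 p q"
    then have s': "satisfies (UNIV::s4 set) add4 mul4 q p" unfolding satisfies_def by simp
    show "satisfies A ad mu p q" unfolding satisfies_def
    proof (intro allI impI)
      fix \<sigma> :: "nat \<Rightarrow> 'a" assume sg: "\<forall>v. \<sigma> v \<in> A"
      show "eval ad mu \<sigma> p = eval ad mu \<sigma> q"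
        using lanti[OF eval_in[OF sg] eval_in[OF sg] dir[OF sg s'] dir[OF sg s]] by simp
    qed
  qed
qed

theorem proposition6p5:
  fixes A :: "'a set" and ad mu :: "'a \<Rightarrow> 'a \<Rightarrow> 'a"
  shows "in_V_S4 A ad mu \<longleftrightarrow>
    ai_semiring A ad mu \<and>
    satisfies A ad mu (Mul (Var (0::nat)) (Var 1)) (Mul (Var 1) (Var 0)) \<and>
    satisfies A ad mu (Mul (Mul (Var (0::nat)) (Var 0)) (Var 1)) (Mul (Var 0) (Var 1)) \<and>
    satisfies A ad mu (Mul (Var (0::nat)) (Var 0)) (Add (Mul (Var 0) (Var 0)) (Var 0)) \<and>
    satisfies A ad mu
      (Add (Var (0::nat)) (Mul (Mul (Var 0) (Var 1)) (Var 2)))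
      (Add (Add (Var 0) (Mul (Mul (Var 0) (Var 1)) (Var 2))) (Mul (Var 0) (Var 1))) \<and>
    satisfies A ad mu
      (Add (Mul (Var (0::nat)) (Var 1)) (Mul (Var 2) (Var 3)))
      (Add (Add (Mul (Var 0) (Var 1)) (Mul (Var 2) (Var 3)))
           (Mul (Mul (Mul (Var 0) (Var 1)) (Var 2)) (Var 3)))"
  using fwd bwd by blast


end
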